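(* Let $r\ge 1$, $\mathbf{m}=(m_1,\ldots,m_r)\in\mathbb{N}^r$, $m=m_1+\cdots+m_r$, $\mathbf{f}=(f_1,\ldots,f_r)\in\mathbb{C}^r$ and $b,c\in\mathbb{C}$. Then for $0<t<1$ $$ G_{r+1,r+1}^{r+1,0}\!\left(t\,\middle|\,\begin{matrix}c,\mathbf{f}\\ b,\mathbf{f}+\mathbf{m}\end{matrix}\right) =\frac{t^b(1-t)^{c-b-1}}{\Gamma(c-b)}\sum_{k=0}^m D_k\,(c-b-k)_{k}\,\frac{t^k}{(t-1)^{k}}, $$ where $$ D_k=D_k(\mathbf{f},\mathbf{m},b)=\sum_{j=k}^m\alpha_j\,\mathbf{S}_{j}^{(k)} =\frac{(-1)^k(\mathbf{f}-b)_{\mathbf{m}}}{k!}\,{}_{r+1}F_{r}\!\left(\begin{matrix}-k,\,1-\mathbf{f}+b\\ 1-\mathbf{f}+b-\mathbf{m}\end{matrix}\right), $$ the numbers $\alpha_j$ being defined by the polynomial identity $(\mathbf{f}-b-t)_{\mathbf{m}}=\sum_{j=0}^{m}\alpha_j t^j$.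
   Context: $(a)_k=\Gamma(a+k)/\Gamma(a)$ is the rising factorial. For a vector $\mathbf{f}=(f_1,\ldots,f_r)$ and $\mathbf{m}=(m_1,\ldots,m_r)$: $(\mathbf{f})_{\mathbf{m}}=\prod_{i}(f_i)_{m_i}$, $(\mathbf{f})_n=\prod_i (f_i)_n$ for a scalar $n$, $\mathbf{f}+\alpha=(f_1+\alpha,\ldots,f_r+\alpha)$, $\mathbf{f}+\mathbf{m}$ is componentwise, and a vector appearing among the parameters of a hypergeometric or $G$ function means its components are listed. ${}_pF_q(\mathbf{a};\mathbf{b})$ without argument denotes ${}_pF_q(\mathbf{a};\mathbf{b};1)$ (here a terminating series). $\mathbf{S}_j^{(k)}$ are Stirling numbers of the second kind, defined by $n^j=\sum_{k=0}^j \mathbf{S}_j^{(k)}\,n(n-1)\cdots(n-k+1)$. $G^{r+1,0}_{r+1,r+1}$ is Meijer's $G$-function: $G^{r+1,0}_{r+1,r+1}(t\,|\,c,\mathbf{f};b,\mathbf{f}+\mathbf{m})=\frac{1}{2\pi i}\int_L \frac{\Gamma(b+s)\prod_i\Gamma(f_i+m_i+s)}{\Gamma(c+s)\prod_i\Gamma(f_i+s)}t^{-s}\,ds$, with $L$ a loop beginning and ending at $-\infty$ encircling all poles of the numerator Gamma functions once in the positive direction. *)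

theory Defs
  imports "HOL-Complex_Analysis.Complex_Analysis" "HOL-Combinatorics.Stirling"
    "HOL-Computational_Algebra.Polynomial"
begin

text \<open>Integrand of Meijer's G-function G^{r+1,0}_{r+1,r+1}(t | c, f; b, f+m):
  Gamma(b+s) prod_i Gamma(f_i+m_i+s) / (Gamma(c+s) prod_i Gamma(f_i+s)) t^(-s).
  Reciprocal Gamma factors are written with the entire function rGamma.\<close>
definition meijer_integrand ::
  "nat \<Rightarrow> complex \<Rightarrow> complex \<Rightarrow> (nat \<Rightarrow> complex) \<Rightarrow> (nat \<Rightarrow> nat) \<Rightarrow> real \<Rightarrow> complex \<Rightarrow> complex" where
  "meijer_integrand r b c f m t s =
     Gamma (b + s) * (\<Prod>i<r. Gamma (f i + of_nat (m i) + s))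
     * rGamma (c + s) * (\<Prod>i<r. rGamma (f i + s)) * (complex_of_real t) powr (- s)"

text \<open>Height and right abscissa of the loop: all poles of the numerator Gamma
  functions (at -b-n and -f_i-m_i-n) lie strictly inside.\<close>
definition meijer_H :: "nat \<Rightarrow> complex \<Rightarrow> (nat \<Rightarrow> complex) \<Rightarrow> real" where
  "meijer_H r b f = 1 + \<bar>Im b\<bar> + (\<Sum>i<r. \<bar>Im (f i)\<bar>)"

definition meijer_X :: "nat \<Rightarrow> complex \<Rightarrow> (nat \<Rightarrow> complex) \<Rightarrow> real" where
  "meijer_X r b f = 1 + \<bar>Re b\<bar> + (\<Sum>i<r. \<bar>Re (f i)\<bar>)"

text \<open>Letting R tend to infinity gives a loop beginning and ending
  at -infinity and encircling all poles once in the positive direction.\<close>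
definition meijer_loop :: "real \<Rightarrow> real \<Rightarrow> real \<Rightarrow> real \<Rightarrow> complex" where
  "meijer_loop X H R =
     linepath (Complex (-R) (-H)) (Complex X (-H))
     +++ linepath (Complex X (-H)) (Complex X H)
     +++ linepath (Complex X H) (Complex (-R) H)"

definition meijerG ::
  "nat \<Rightarrow> real \<Rightarrow> complex \<Rightarrow> (nat \<Rightarrow> complex) \<Rightarrow> complex \<Rightarrow> (nat \<Rightarrow> nat) \<Rightarrow> complex" where
  "meijerG r t c f b m =
     Lim at_top (\<lambda>R::real. contour_integral
        (meijer_loop (meijer_X r b f) (meijer_H r b f) R)
        (meijer_integrand r b c f m t) / (2 * of_real pi * \<i>))"

definition meijer_alpha :: "nat \<Rightarrow> (nat \<Rightarrow> complex) \<Rightarrow> (nat \<Rightarrow> nat) \<Rightarrow> complex \<Rightarrow> nat \<Rightarrow> complex" where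
  "meijer_alpha r f m b j =
     coeff (\<Prod>i<r. pochhammer [:f i - b, -1:] (m i)) j"

definition hyp_F :: "nat \<Rightarrow> (nat \<Rightarrow> complex) \<Rightarrow> (nat \<Rightarrow> nat) \<Rightarrow> complex \<Rightarrow> nat \<Rightarrow> complex" where
  "hyp_F r f m b k =
     (\<Sum>n\<le>k. pochhammer (- of_nat k) n * (\<Prod>i<r. pochhammer (1 - f i + b) n)
        / ((\<Prod>i<r. pochhammer (1 - f i + b - of_nat (m i)) n) * fact n))"

end

theory Submission
  imports Defs
begin


definition ff :: "nat \<Rightarrow> 'a::comm_ring_1 \<Rightarrow> 'a" where
  "ff k x = (\<Prod>i<k. x - of_nat i)"

lemma ff_0 [simp]: "ff 0 x = 1" by (simp add: ff_def)
lemma ff_Suc: "ff (Suc k) x = ff k x * (x - of_nat k)" by (simp add: ff_def)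

lemma x_ff: "x * ff k x = ff (Suc k) x + of_nat k * ff k x"
  by (simp add: ff_Suc algebra_simps)

lemma stirling_power:
  fixes x :: "'a::comm_ring_1"
  shows "x ^ j = (\<Sum>k\<le>j. of_nat (Stirling j k) * ff k x)"
proof (induction j)
  case 0
  then show ?case by simp
next
  case (Suc j)
  define g where "g k = of_nat k * (of_nat (Stirling j k) * ff k x)" for k
  have g1: "(\<Sum>k\<le>j. g k) = (\<Sum>k\<le>j. g (Suc k))"
  proof -
    have "(\<Sum>k\<le>Suc j. g k) = g 0 + (\<Sum>k\<le>j. g (Suc k))" by (rule sum.atMost_Suc_shift)
    moreover have "(\<Sum>k\<le>Suc j. g k) = (\<Sum>k\<le>j. g k)" by (simp add: g_def)
    ultimately show ?thesis by (simp add: g_def)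
  qed
  have "x ^ Suc j = (\<Sum>k\<le>j. of_nat (Stirling j k) * (x * ff k x))"
    by (simp add: Suc sum_distrib_left algebra_simps)
  also have "\<dots> = (\<Sum>k\<le>j. of_nat (Stirling j k) * ff (Suc k) x) + (\<Sum>k\<le>j. g k)"
    by (simp add: x_ff g_def algebra_simps sum.distrib)
  also have "\<dots> = (\<Sum>k\<le>j. of_nat (Stirling j k) * ff (Suc k) x + g (Suc k))"
    by (simp add: g1 sum.distrib)
  also have "\<dots> = (\<Sum>k\<le>j. of_nat (Stirling (Suc j) (Suc k)) * ff (Suc k) x)"
    by (intro sum.cong refl) (simp add: g_def algebra_simps)
  also have "\<dots> = (\<Sum>k\<le>Suc j. of_nat (Stirling (Suc j) k) * ff k x)"
    by (subst sum.atMost_Suc_shift) simp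
  finally show ?case .
qed

lemma ff_of_nat: "ff k (of_nat n :: 'a::field_char_0) = fact k * of_nat (n choose k)"
  by (simp add: ff_def binomial_gbinomial gbinomial_mult_fact atLeast0LessThan)

lemma alt_binom: "(\<Sum>p\<le>q. (-1)^(q-p) * of_nat (q choose p)) = (0::'a::comm_ring_1) ^ q"
  using binomial_ring[of "1::'a" "-1" q] by (simp add: mult_of_nat_commute)

lemma alt_sum_choose:
  assumes "i \<le> k"
  shows "(\<Sum>n\<le>k. (-1)^(k-n) * of_nat (k choose n) * of_nat (n choose i))
         = of_nat (k choose i) * (0::'a::comm_ring_1) ^ (k - i)"
proof -
  define g :: "nat \<Rightarrow> 'a" where "g n = (-1)^(k-n) * of_nat (k choose n) * of_nat (n choose i)" for n
  have "(\<Sum>n\<le>k. g n) = (\<Sum>n\<in>{i..k}. g n)"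
    by (rule sum.mono_neutral_right) (auto simp: g_def binomial_eq_0)
  also have "{i..k} = (\<lambda>p. p + i) ` {..k-i}"
  proof -
    have "n \<in> (\<lambda>p. p + i) ` {..k-i}" if "n \<in> {i..k}" for n
      using that by (intro image_eqI[of _ _ "n - i"]) auto
    then show ?thesis using assms by auto
  qed
  also have "(\<Sum>n\<in>(\<lambda>p. p + i) ` {..k-i}. g n) = (\<Sum>p\<le>k-i. g (p + i))"
    by (subst sum.reindex) (auto simp: inj_on_def)
  also have "\<dots> = (\<Sum>p\<le>k-i. of_nat (k choose i) * ((-1)^((k-i)-p) * of_nat ((k-i) choose p)))"
  proof (intro sum.cong refl)
    fix p assume p: "p \<in> {..k-i}"
    have "(k choose (p+i)) * ((p+i) choose i) = (k choose i) * ((k - i) choose (p + i - i))"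
      using p assms by (intro choose_mult) auto
    then have "of_nat (k choose (p+i)) * of_nat ((p+i) choose i) = (of_nat (k choose i) * of_nat ((k-i) choose p) :: 'a)"
      by (metis add_diff_cancel_right' of_nat_mult)
    moreover have "k - (p + i) = (k - i) - p" by simp
    ultimately show "g (p + i) = of_nat (k choose i) * ((-1)^((k-i)-p) * of_nat ((k-i) choose p))"
      unfolding g_def by (metis (no_types, lifting) mult.assoc mult.left_commute)
  qed
  also have "\<dots> = of_nat (k choose i) * (0::'a) ^ (k - i)"
    by (subst sum_distrib_left[symmetric]) (rule arg_cong[where f="\<lambda>z. _ * z"], rule alt_binom)
  finally show ?thesis unfolding g_def .
qed

lemma alt_sum_ff:
  "(\<Sum>n\<le>k. (-1)^(k-n) * of_nat (k choose n) * ff i (of_nat n))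
     = (if i = k then fact k else (0::'a::field_char_0))"
proof (cases "i \<le> k")
  case True
  have "(\<Sum>n\<le>k. (-1)^(k-n) * of_nat (k choose n) * ff i (of_nat n))
      = fact i * (\<Sum>n\<le>k. (-1)^(k-n) * of_nat (k choose n) * (of_nat (n choose i) :: 'a))"
    by (simp add: ff_of_nat sum_distrib_left algebra_simps)
  also have "\<dots> = fact i * (of_nat (k choose i) * 0 ^ (k - i))"
    using alt_sum_choose[OF True] by simp
  also have "\<dots> = (if i = k then fact k else 0)"
    using True by auto
  finally show ?thesis .
next
  case False
  then show ?thesis by (auto intro!: sum.neutral simp: ff_of_nat)
qed

lemma fd_power:
  "(\<Sum>n\<le>k. (-1)^(k-n) * of_nat (k choose n) * of_nat n ^ j)
     = fact k * (of_nat (Stirling j k) :: 'a::field_char_0)"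
proof -
  have "(\<Sum>n\<le>k. (-1)^(k-n) * of_nat (k choose n) * (of_nat n ^ j :: 'a))
     = (\<Sum>n\<le>k. \<Sum>i\<le>j. of_nat (Stirling j i) * ((-1)^(k-n) * of_nat (k choose n) * ff i (of_nat n)))"
    by (subst stirling_power) (simp add: sum_distrib_left algebra_simps)
  also have "\<dots> = (\<Sum>i\<le>j. of_nat (Stirling j i) * (\<Sum>n\<le>k. (-1)^(k-n) * of_nat (k choose n) * ff i (of_nat n)))"
    by (subst sum.swap) (simp add: sum_distrib_left)
  also have "\<dots> = (\<Sum>i\<le>j. of_nat (Stirling j i) * (if i = k then fact k else 0))"
    by (simp add: alt_sum_ff)
  also have "\<dots> = fact k * of_nat (Stirling j k)"
    by (cases "k \<le> j") (auto simp: if_distrib cong: if_cong)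
  finally show ?thesis .
qed

lemma poly_pochhammer: "poly (pochhammer p k) x = pochhammer (poly p x) k"
  by (induction k) (simp_all add: pochhammer_Suc)

lemma degree_pochhammer_lin: "degree (pochhammer [:a, -1:] k) \<le> k"
proof (induction k)
  case (Suc k)
  have "degree (pochhammer [:a, -1:] k * ([:a, -1:] + of_nat k)) \<le> k + 1"
  proof -
    have "degree ([:a, -1:] + of_nat k) \<le> 1"
      by (rule order.trans[OF degree_add_le]) auto
    then show ?thesis using Suc by (intro order.trans[OF degree_mult_le]) auto
  qed
  then show ?case by (simp add: pochhammer_Suc)
qed simp

lemma poch_id:
  fixes x :: "'a::comm_ring_1"
  shows "pochhammer (x - of_nat n) m * pochhammer (1 - x - of_nat m) n
       = pochhammer x m * pochhammer (1 - x) n"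
proof -
  have a: "pochhammer (1 - x - of_nat m) n = (-1)^n * pochhammer (x + of_nat m - of_nat n) n"
    using pochhammer_minus'[of "of_nat n - x - of_nat m" n] by (simp add: algebra_simps)
  have b: "pochhammer (1 - x) n = (-1)^n * pochhammer (x - of_nat n) n"
    using pochhammer_minus'[of "of_nat n - x" n] by (simp add: algebra_simps)
  have c: "pochhammer (x - of_nat n) (m + n) = pochhammer (x - of_nat n) m * pochhammer (x + of_nat m - of_nat n) n"
    by (subst pochhammer_product') (simp add: algebra_simps)
  have d: "pochhammer (x - of_nat n) (n + m) = pochhammer (x - of_nat n) n * pochhammer x m"
    by (subst pochhammer_product') simp
  show ?thesis using a b c d by (simp add: add.commute algebra_simps)
qed

lemma pochhammer_neg_nat:
  "pochhammer (- of_nat k) n = (-1)^n * fact n * (of_nat (k choose n) :: 'a::field_char_0)"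
proof -
  have e: "fact n * (of_nat k gchoose n) = (-1)^n * (pochhammer (- of_nat k) n :: 'a)"
    using gbinomial_pochhammer[of "of_nat k :: 'a" n] by (simp add: field_simps)
  have m: "(-1::'a)^n * (-1)^n = 1" by (simp flip: power_mult_distrib)
  have "(-1)^n * (fact n * (of_nat k gchoose n)) = ((-1::'a)^n * (-1)^n) * pochhammer (- of_nat k) n"
    by (simp add: e)
  then show ?thesis by (simp add: m binomial_gbinomial algebra_simps)
qed



lemma part2:
  fixes r :: nat and m :: "nat \<Rightarrow> nat" and f :: "nat \<Rightarrow> complex" and b :: complex
  assumes MM: "M = (\<Sum>i<r. m i)"
    and hyp: "\<forall>n\<le>k. \<forall>i<r. pochhammer (1 - f i + b - of_nat (m i)) n \<noteq> 0"
  shows "(\<Sum>j=k..M. meijer_alpha r f m b j * of_nat (Stirling j k))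
       = (-1) ^ k * (\<Prod>i<r. pochhammer (f i - b) (m i)) / fact k * hyp_F r f m b k"
proof -
  define Q where "Q = (\<Prod>i<r. pochhammer [:f i - b, -1:] (m i))"
  define \<alpha> where "\<alpha> j = coeff Q j" for j
  have alpha: "meijer_alpha r f m b j = \<alpha> j" for j
    by (simp add: meijer_alpha_def \<alpha>_def Q_def)
  have degQ: "degree Q \<le> M"
  proof -
    have "degree Q \<le> (\<Sum>i<r. degree (pochhammer [:f i - b, -1:] (m i)))"
      unfolding Q_def using degree_prod_sum_le[of "{..<r}" "\<lambda>i. pochhammer [:f i - b, -1:] (m i)"]
      by (simp add: o_def)
    also have "\<dots> \<le> M" unfolding MM by (intro sum_mono degree_pochhammer_lin)
    finally show ?thesis .
  qed
  have polyQ: "poly Q x = (\<Sum>j\<le>M. \<alpha> j * x ^ j)" for x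
  proof -
    have "poly Q x = (\<Sum>j\<le>degree Q. \<alpha> j * x ^ j)" by (simp add: poly_altdef \<alpha>_def)
    also have "\<dots> = (\<Sum>j\<le>M. \<alpha> j * x ^ j)"
      using degQ by (intro sum.mono_neutral_left) (auto simp: \<alpha>_def coeff_eq_0)
    finally show ?thesis .
  qed
  have polyQ2: "poly Q x = (\<Prod>i<r. pochhammer (f i - b - x) (m i))" for x
    unfolding Q_def poly_prod poly_pochhammer by simp
  define D :: complex where "D = (\<Sum>j\<le>M. \<alpha> j * of_nat (Stirling j k))"
  have D1: "(\<Sum>j=k..M. meijer_alpha r f m b j * of_nat (Stirling j k)) = D"
    unfolding D_def alpha by (intro sum.mono_neutral_left) auto
  define c :: "nat \<Rightarrow> complex" where "c n = (-1)^(k-n) * of_nat (k choose n)" for n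
  have D2: "fact k * D = (\<Sum>n\<le>k. c n * poly Q (of_nat n))"
  proof -
    have "(\<Sum>n\<le>k. c n * poly Q (of_nat n)) = (\<Sum>n\<le>k. \<Sum>j\<le>M. \<alpha> j * (c n * of_nat n ^ j))"
      by (simp add: polyQ sum_distrib_left algebra_simps)
    also have "\<dots> = (\<Sum>j\<le>M. \<alpha> j * (\<Sum>n\<le>k. c n * of_nat n ^ j))"
      by (subst sum.swap) (simp add: sum_distrib_left)
    also have "\<dots> = (\<Sum>j\<le>M. \<alpha> j * (fact k * of_nat (Stirling j k)))"
      unfolding c_def by (simp add: fd_power)
    also have "\<dots> = fact k * D" by (simp add: D_def sum_distrib_left algebra_simps)
    finally show ?thesis by simp
  qed
  define A where "A = (\<Prod>i<r. pochhammer (f i - b) (m i))"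
  define U where "U n = (\<Prod>i<r. pochhammer (1 - f i + b) n)" for n
  define W where "W n = (\<Prod>i<r. pochhammer (1 - f i + b - of_nat (m i)) n)" for n
  have Wnz: "W n \<noteq> 0" if "n \<le> k" for n
    using hyp that unfolding W_def by (auto simp: prod_zero_iff)
  have PQ: "poly Q (of_nat n) = A * U n / W n" if "n \<le> k" for n
  proof -
    have "poly Q (of_nat n) * W n = (\<Prod>i<r. pochhammer (f i - b - of_nat n) (m i) * pochhammer (1 - (f i - b) - of_nat (m i)) n)"
      unfolding polyQ2 W_def by (simp add: prod.distrib algebra_simps)
    also have "\<dots> = (\<Prod>i<r. pochhammer (f i - b) (m i) * pochhammer (1 - (f i - b)) n)"
      by (intro prod.cong refl poch_id)
    also have "\<dots> = A * U n" unfolding A_def U_def by (simp add: prod.distrib algebra_simps)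
    finally show ?thesis using Wnz[OF that] by (simp add: field_simps)
  qed
  have HF: "hyp_F r f m b k = (\<Sum>n\<le>k. (-1)^n * of_nat (k choose n) * U n / W n)"
    unfolding hyp_F_def U_def W_def
    by (intro sum.cong refl) (simp add: pochhammer_neg_nat field_simps)
  have "fact k * D = (\<Sum>n\<le>k. c n * (A * U n / W n))"
    using D2 PQ by simp
  also have "\<dots> = (-1)^k * A * hyp_F r f m b k"
  proof -
    have "c n * (A * U n / W n) = (-1)^k * A * ((-1)^n * of_nat (k choose n) * U n / W n)" if "n \<le> k" for n
    proof -
      have "(-1::complex)^(k-n) = (-1)^k * (-1)^n"
      proof -
        have "(-1::complex)^k = (-1)^(k-n) * (-1)^n" using that by (simp flip: power_add)
        moreover have "(-1::complex)^n * (-1)^n = 1" by (simp flip: power_mult_distrib)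
        ultimately show ?thesis by (metis mult.assoc mult.right_neutral)
      qed
      then show ?thesis unfolding c_def by simp
    qed
    then show ?thesis unfolding HF sum_distrib_left by (intro sum.cong refl) auto
  qed
  finally have "fact k * D = (-1)^k * A * hyp_F r f m b k" .
  then have "D = (-1)^k * A / fact k * hyp_F r f m b k"
    by (simp add: field_simps)
  then show ?thesis using D1 A_def by simp
qed



lemma nonpos_Ints_ReIm:
  assumes "(z::complex) \<in> \<int>\<^sub>\<le>\<^sub>0"
  shows "Im z = 0" "Re z \<le> 0" "Re z \<in> \<int>"
  using assms by (auto elim!: nonpos_Ints_cases)

locale meij =
  fixes r :: nat and m :: "nat \<Rightarrow> nat" and f :: "nat \<Rightarrow> complex" and b c :: complex and t :: real
  assumes t0: "0 < t" and t1: "t < 1"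
begin

definition P :: "complex \<Rightarrow> complex" where
  "P s = (\<Prod>i<r. pochhammer (f i + s) (m i))"
definition h :: "complex \<Rightarrow> complex" where
  "h s = Gamma (b + s) * rGamma (c + s) * P s * exp (- s * of_real (ln t))"
abbreviation X where "X \<equiv> meijer_X r b f"
abbreviation H where "H \<equiv> meijer_H r b f"
definition RN :: "nat \<Rightarrow> real" where "RN N = Re b + real N + 1/2"
definition res :: "nat \<Rightarrow> complex" where
  "res n = (-1)^n / fact n * rGamma (c - b - of_nat n) * P (-b - of_nat n)
           * exp ((b + of_nat n) * of_real (ln t))"

lemma H_Imb: "\<bar>Im b\<bar> < H"
proof -
  have "0 \<le> (\<Sum>i<r. \<bar>Im (f i)\<bar>)" by (intro sum_nonneg) auto
  then show ?thesis unfolding meijer_H_def by linarith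
qed
lemma H_Imf: "i < r \<Longrightarrow> \<bar>Im (f i)\<bar> < H"
proof -
  assume "i < r"
  then have "\<bar>Im (f i)\<bar> \<le> (\<Sum>i<r. \<bar>Im (f i)\<bar>)" by (intro member_le_sum) auto
  then show ?thesis unfolding meijer_H_def by auto
qed
lemma X_Reb: "\<bar>Re b\<bar> < X"
proof -
  have "0 \<le> (\<Sum>i<r. \<bar>Re (f i)\<bar>)" by (intro sum_nonneg) auto
  then show ?thesis unfolding meijer_X_def by linarith
qed
lemma X_Ref: "i < r \<Longrightarrow> \<bar>Re (f i)\<bar> < X"
proof -
  assume "i < r"
  then have "\<bar>Re (f i)\<bar> \<le> (\<Sum>i<r. \<bar>Re (f i)\<bar>)" by (intro member_le_sum) auto
  then show ?thesis unfolding meijer_X_def by auto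
qed
lemma H_pos: "H > 0" using H_Imb by linarith
lemma X_pos: "X > 0" using X_Reb by linarith

lemma P_holo: "P holomorphic_on A"
proof -
  have "(\<lambda>s. \<Prod>i<r. \<Prod>j\<in>{0..<m i}. f i + s + of_nat j) holomorphic_on A"
    by (intro holomorphic_intros)
  then show ?thesis unfolding P_def pochhammer_prod by simp
qed

lemma h_holo:
  assumes "\<And>s. s \<in> A \<Longrightarrow> b + s \<notin> \<int>\<^sub>\<le>\<^sub>0"
  shows "h holomorphic_on A"
proof -
  have "(\<lambda>s. Gamma (b + s) * rGamma (c + s) * P s * exp (- s * of_real (ln t))) holomorphic_on A"
    by (intro holomorphic_intros P_holo[unfolded holomorphic_on_def, folded holomorphic_on_def] assms)
       (use P_holo in auto)
  then show ?thesis unfolding h_def[abs_def] by simp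
qed

lemma h_cont:
  assumes "\<And>s. s \<in> A \<Longrightarrow> b + s \<notin> \<int>\<^sub>\<le>\<^sub>0"
  shows "continuous_on A h"
  using h_holo[OF assms] holomorphic_on_imp_continuous_on by blast

lemma integrand_eq:
  assumes "\<forall>i<r. f i + of_nat (m i) + s \<notin> \<int>\<^sub>\<le>\<^sub>0"
  shows "meijer_integrand r b c f m t s = h s"
proof -
  have g: "Gamma (f i + of_nat (m i) + s) * rGamma (f i + s) = pochhammer (f i + s) (m i)" if "i < r" for i
  proof -
    have nz: "rGamma (f i + s + of_nat (m i)) \<noteq> 0"
      using assms that by (simp add: rGamma_eq_zero_iff add_ac)
    have "rGamma (f i + s) = pochhammer (f i + s) (m i) * rGamma (f i + s + of_nat (m i))"
      by (rule pochhammer_rGamma)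
    then show ?thesis using nz by (simp add: Gamma_def add_ac field_simps)
  qed
  have pw: "(complex_of_real t) powr (- s) = exp (- s * of_real (ln t))"
    using t0 by (simp add: powr_def Ln_of_real)
  have "meijer_integrand r b c f m t s
     = Gamma (b + s) * rGamma (c + s) * (\<Prod>i<r. Gamma (f i + of_nat (m i) + s) * rGamma (f i + s))
       * (complex_of_real t) powr (- s)"
    unfolding meijer_integrand_def prod.distrib by (simp add: algebra_simps)
  also have "(\<Prod>i<r. Gamma (f i + of_nat (m i) + s) * rGamma (f i + s)) = P s"
    unfolding P_def by (intro prod.cong refl g) auto
  finally show ?thesis unfolding pw h_def by simp
qed

lemma loop_points:
  assumes "s \<in> path_image (meijer_loop X H R)"
  shows "Im s = -H \<or> Re s = X \<or> Im s = H"
  using assms unfolding meijer_loop_def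
  by (auto simp: path_image_join closed_segment_same_Im closed_segment_same_Re)

lemma loop_good:
  assumes "s \<in> path_image (meijer_loop X H R)"
  shows "\<forall>i<r. f i + of_nat (m i) + s \<notin> \<int>\<^sub>\<le>\<^sub>0" "b + s \<notin> \<int>\<^sub>\<le>\<^sub>0"
proof -
  have good: "z \<notin> \<int>\<^sub>\<le>\<^sub>0" if "Im z \<noteq> 0 \<or> Re z > 0" for z
    using that nonpos_Ints_ReIm[of z] by auto
  show "\<forall>i<r. f i + of_nat (m i) + s \<notin> \<int>\<^sub>\<le>\<^sub>0"
  proof (intro allI impI good)
    fix i assume i: "i < r"
    show "Im (f i + of_nat (m i) + s) \<noteq> 0 \<or> 0 < Re (f i + of_nat (m i) + s)"
      using loop_points[OF assms] H_Imf[OF i] X_Ref[OF i] by auto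
  qed
  show "b + s \<notin> \<int>\<^sub>\<le>\<^sub>0"
    by (intro good) (use loop_points[OF assms] H_Imb X_Reb in auto)
qed

lemma I_eq: "contour_integral (meijer_loop X H R) (meijer_integrand r b c f m t)
           = contour_integral (meijer_loop X H R) h"
  by (intro contour_integral_eq integrand_eq loop_good)

lemma residue_h: "residue h (-b - of_nat n) = res n"
proof (rule residue_simple'[of "ball (-b - of_nat n) 1"])
  define p where "p = -b - of_nat n"
  show "open (ball (-b - of_nat n) 1)" by simp
  show "-b - of_nat n \<in> ball (-b - of_nat n) 1" by simp
  show "h holomorphic_on ball (-b - of_nat n) 1 - {-b - of_nat n}"
  proof (rule h_holo)
    fix s assume s: "s \<in> ball (-b - of_nat n) 1 - {-b - of_nat n}"
    show "b + s \<notin> \<int>\<^sub>\<le>\<^sub>0"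
    proof
      assume "b + s \<in> \<int>\<^sub>\<le>\<^sub>0"
      then obtain k where k: "b + s = - of_nat k" by (elim nonpos_Ints_cases')
      have sk: "s = -b - of_nat k"
      proof -
        have "s = (b + s) - b" by simp
        also have "\<dots> = - of_nat k - b" by (simp only: k)
        finally show ?thesis by simp
      qed
      have "s - (-b - of_nat n) = of_int (int n - int k)" using sk by (simp add: algebra_simps)
      moreover have "norm (s - (-b - of_nat n)) < 1" using s by (simp add: dist_norm norm_minus_commute)
      ultimately have "\<bar>of_int (int n - int k) :: real\<bar> < 1" by (metis norm_of_int)
      then have "int n = int k" by linarith
      then have "s = -b - of_nat n" using sk by simp
      then show False using s by simp
    qed
  qed
  define g0 where "g0 w = rGamma (c + w) * P w * exp (- w * of_real (ln t))" for w
  have "g0 holomorphic_on UNIV" unfolding g0_def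
    by (intro holomorphic_intros P_holo[unfolded holomorphic_on_def, folded holomorphic_on_def])
  then have "isCont g0 p" using holomorphic_on_imp_continuous_on continuous_on_eq_continuous_at
    by blast
  then have g0lim: "(g0 \<longlongrightarrow> g0 p) (at p)" by (simp add: isCont_def)
  have glim: "((\<lambda>x. Gamma (x + b) * (x + b + of_nat n)) \<longlongrightarrow> (-1)^n / fact n) (at p)"
  proof -
    have "p = - of_nat n - b" by (simp add: p_def)
    then show ?thesis using LIM_offset[OF Gamma_residues[of n], of b] by (simp add: add_ac)
  qed
  have "((\<lambda>x. Gamma (x + b) * (x + b + of_nat n) * g0 x) \<longlongrightarrow> (-1)^n / fact n * g0 p) (at p)"
    by (intro tendsto_mult glim g0lim)
  moreover have "(\<lambda>w. h w * (w - (-b - of_nat n))) = (\<lambda>x. Gamma (x + b) * (x + b + of_nat n) * g0 x)"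
    by (auto simp: h_def g0_def fun_eq_iff algebra_simps)
  moreover have "(-1)^n / fact n * g0 p = res n"
    by (simp add: g0_def p_def res_def algebra_simps)
  ultimately show "((\<lambda>w. h w * (w - (-b - of_nat n))) \<longlongrightarrow> res n) (at (-b - of_nat n))"
    by (simp add: p_def)
qed

lemma rect_res:
  "contour_integral (rectpath (Complex (-RN N) (-H)) (Complex X H)) h = 2 * pi * \<i> * (\<Sum>n\<le>N. res n)"
proof -
  define a1 where "a1 = Complex (-RN N) (-H)"
  define a3 where "a3 = Complex X H"
  define pts where "pts = (\<lambda>n. -b - of_nat n) ` {..N}"
  define S where "S = box (Complex (-RN N - 1/2) (-H - 1)) (Complex (X + 1) (H + 1))"
  have RX: "-RN N < X" using X_Reb unfolding RN_def by linarith
  have le: "Re a1 \<le> Re a3" "Im a1 \<le> Im a3" using RX H_pos by (auto simp: a1_def a3_def)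
  have pts_box: "pts \<subseteq> box a1 a3"
    using X_Reb H_Imb by (auto simp: pts_def a1_def a3_def in_box_complex_iff RN_def)
  have cbS: "cbox a1 a3 \<subseteq> S"
    by (auto simp: S_def a1_def a3_def in_box_complex_iff in_cbox_complex_iff)
  have holo: "h holomorphic_on S - pts"
  proof (rule h_holo)
    fix s assume s: "s \<in> S - pts"
    show "b + s \<notin> \<int>\<^sub>\<le>\<^sub>0"
    proof
      assume "b + s \<in> \<int>\<^sub>\<le>\<^sub>0"
      then obtain k where k: "b + s = - of_nat k" by (elim nonpos_Ints_cases')
      have sk: "s = -b - of_nat k"
      proof -
        have "s = (b + s) - b" by simp
        also have "\<dots> = - of_nat k - b" by (simp only: k)
        finally show ?thesis by simp
      qed
      have "Re s > -RN N - 1/2" using s by (auto simp: S_def in_box_complex_iff)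
      then have "real k < real N + 1" using sk by (simp add: RN_def)
      then have "k \<le> N" by linarith
      then have "s \<in> pts" using sk by (auto simp: pts_def)
      then show False using s by simp
    qed
  qed
  have "contour_integral (rectpath a1 a3) h = 2 * pi * \<i> * (\<Sum>p\<in>pts. winding_number (rectpath a1 a3) p * residue h p)"
  proof (rule Residue_theorem[OF _ _ _ holo])
    show "open S" by (simp add: S_def open_box)
    show "connected S" by (simp add: S_def convex_connected)
    show "finite pts" by (simp add: pts_def)
    show "valid_path (rectpath a1 a3)" by simp
    show "pathfinish (rectpath a1 a3) = pathstart (rectpath a1 a3)" by simp
    show "path_image (rectpath a1 a3) \<subseteq> S - pts"
      using path_image_rectpath_cbox_minus_box[OF le] cbS pts_box by auto
    show "\<forall>z. z \<notin> S \<longrightarrow> winding_number (rectpath a1 a3) z = 0"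
      using winding_number_rectpath_outside[OF le] cbS by auto
  qed
  also have "(\<Sum>p\<in>pts. winding_number (rectpath a1 a3) p * residue h p) = (\<Sum>p\<in>pts. residue h p)"
    using pts_box by (intro sum.cong refl) (auto simp: winding_number_rectpath)
  also have "\<dots> = (\<Sum>n\<le>N. residue h (-b - of_nat n))"
    unfolding pts_def by (subst sum.reindex) (auto simp: inj_on_def)
  also have "\<dots> = (\<Sum>n\<le>N. res n)" by (simp add: residue_h)
  finally show ?thesis by (simp add: a1_def a3_def)
qed

end


lemma poly_geom_lim:
  fixes t A :: real
  assumes "0 < t" "t < 1" "0 \<le> A"
  shows "(\<lambda>N. (A + real N) ^ q * t ^ N) \<longlonglongrightarrow> 0"
proof (cases "q = 0")
  case True
  then show ?thesis using assms by (simp add: LIMSEQ_power_zero)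
next
  case False
  define s where "s = root q t"
  have s0: "0 < s" using assms False by (simp add: s_def real_root_gt_zero)
  have s1: "s < 1" using assms False by (simp add: s_def)
  have sq: "s ^ q = t" using assms False by (simp add: s_def)
  have "(\<lambda>N. A * s ^ N + of_nat N * s ^ N) \<longlonglongrightarrow> A * 0 + 0"
    using s0 s1 by (intro tendsto_add tendsto_mult tendsto_const LIMSEQ_power_zero powser_times_n_limit_0) auto
  then have "(\<lambda>N. ((A + real N) * s ^ N)) \<longlonglongrightarrow> 0" by (simp add: algebra_simps)
  then have "(\<lambda>N. ((A + real N) * s ^ N) ^ q) \<longlonglongrightarrow> 0 ^ q" by (intro tendsto_power)
  moreover have "((A + real N) * s ^ N) ^ q = (A + real N) ^ q * t ^ N" for N
  proof -
    have "(s ^ N) ^ q = (s ^ q) ^ N" by (simp add: power_mult[symmetric] mult.commute)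
    then show ?thesis by (simp add: power_mult_distrib sq)
  qed
  ultimately show ?thesis using False by (simp add: power_0_left)
qed

lemma poch_ratio_bound:
  fixes z d :: complex and Lr :: nat
  assumes z: "Re z \<le> 0" and d: "norm d \<le> real Lr"
  shows "norm (pochhammer (z + d - of_nat N) N) \<le> norm (pochhammer (z - of_nat N) N) * (real N + 1) ^ Lr"
proof (induction N)
  case 0
  then show ?case by simp
next
  case (Suc N)
  define a where "a = norm (z - of_nat (Suc N))"
  define Q where "Q = norm (pochhammer (z - of_nat N) N)"
  have a_ge: "a \<ge> real N + 1"
  proof -
    have "\<bar>Re (z - of_nat (Suc N))\<bar> \<le> a" unfolding a_def by (rule abs_Re_le_cmod)
    then show ?thesis using z by auto
  qed
  have Q0: "Q \<ge> 0" by (simp add: Q_def)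
  have e1: "pochhammer (z + d - of_nat (Suc N)) (Suc N) = (z + d - of_nat (Suc N)) * pochhammer (z + d - of_nat N) N"
    by (simp add: pochhammer_rec algebra_simps)
  have e2: "pochhammer (z - of_nat (Suc N)) (Suc N) = (z - of_nat (Suc N)) * pochhammer (z - of_nat N) N"
    by (simp add: pochhammer_rec algebra_simps)
  have n1: "norm (z + d - of_nat (Suc N)) \<le> a + real Lr"
  proof -
    have "norm (z + d - of_nat (Suc N)) = norm ((z - of_nat (Suc N)) + d)" by (simp add: algebra_simps)
    also have "\<dots> \<le> a + norm d" unfolding a_def by (rule norm_triangle_ineq)
    finally show ?thesis using d by linarith
  qed
  have key: "(a + real Lr) * (real N + 1) ^ Lr \<le> a * (real (Suc N) + 1) ^ Lr"
  proof -
    have pN: "real N + 1 > 0" by simp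
    have B: "1 + real Lr * (1 / (real N + 1)) \<le> (1 + 1 / (real N + 1)) ^ Lr"
    proof (rule Bernoulli_inequality)
      have "0 \<le> 1 / (real N + 1)" by simp
      then show "-1 \<le> 1 / (real N + 1)" by linarith
    qed
    have "1 + 1 / (real N + 1) = (real (Suc N) + 1) / (real N + 1)" using pN by (simp add: field_simps)
    then have B2: "1 + real Lr / (real N + 1) \<le> (real (Suc N) + 1) ^ Lr / (real N + 1) ^ Lr"
      using B by (simp add: power_divide)
    have "real Lr / a \<le> real Lr / (real N + 1)"
      using a_ge pN by (intro divide_left_mono) auto
    then have "1 + real Lr / a \<le> (real (Suc N) + 1) ^ Lr / (real N + 1) ^ Lr" using B2 by linarith
    then have "(1 + real Lr / a) * (a * (real N + 1) ^ Lr) \<le> ((real (Suc N) + 1) ^ Lr / (real N + 1) ^ Lr) * (a * (real N + 1) ^ Lr)"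
      using a_ge pN by (intro mult_right_mono) auto
    moreover have "(1 + real Lr / a) * (a * (real N + 1) ^ Lr) = (a + real Lr) * (real N + 1) ^ Lr"
      using a_ge pN by (simp add: field_simps)
    moreover have "((real (Suc N) + 1) ^ Lr / (real N + 1) ^ Lr) * (a * (real N + 1) ^ Lr) = a * (real (Suc N) + 1) ^ Lr"
      using pN by (simp add: field_simps)
    ultimately show ?thesis by linarith
  qed
  have "norm (pochhammer (z + d - of_nat (Suc N)) (Suc N)) \<le> (a + real Lr) * (Q * (real N + 1) ^ Lr)"
    unfolding e1 norm_mult Q_def using n1 Suc.IH a_ge by (intro mult_mono) auto
  also have "\<dots> = ((a + real Lr) * (real N + 1) ^ Lr) * Q" by (simp add: algebra_simps)
  also have "\<dots> \<le> (a * (real (Suc N) + 1) ^ Lr) * Q" using key Q0 by (intro mult_right_mono) auto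
  also have "\<dots> = norm (pochhammer (z - of_nat (Suc N)) (Suc N)) * (real (Suc N) + 1) ^ Lr"
    unfolding e2 norm_mult a_def Q_def by (simp add: algebra_simps)
  finally show ?case .
qed

lemma poch_ratio_bound':
  fixes z d :: complex and Lr :: nat
  assumes z: "Re z \<le> 0" and d: "norm d \<le> real Lr"
  shows "norm (pochhammer (z + d - of_nat N) N / pochhammer (z - of_nat N) N) \<le> (real N + 1) ^ Lr"
proof (cases "pochhammer (z - of_nat N) N = 0")
  case True
  then show ?thesis by simp
next
  case False
  then show ?thesis using poch_ratio_bound[OF z d, of N]
    by (simp add: norm_divide divide_le_eq mult.commute)
qed

lemma Gamma_shift: "Gamma (z - of_nat N) = Gamma z / pochhammer (z - of_nat N) N"
proof -
  have "rGamma (z - of_nat N) = pochhammer (z - of_nat N) N * rGamma z"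
    using pochhammer_rGamma[of "z - of_nat N" N] by simp
  then show ?thesis by (simp add: Gamma_def divide_inverse mult.commute)
qed

lemma rGamma_shift: "rGamma (z - of_nat N) = pochhammer (z - of_nat N) N * rGamma z"
  using pochhammer_rGamma[of "z - of_nat N" N] by simp

lemma norm_pochhammer_le: "norm (pochhammer (z::complex) k) \<le> (norm z + real k) ^ k"
proof -
  have "norm (pochhammer z k) \<le> (\<Prod>j\<in>{0..<k}. norm (z + of_nat j))"
    unfolding pochhammer_prod by (rule norm_prod_le)
  also have "\<dots> \<le> (\<Prod>j\<in>{0..<k}. norm z + real k)"
  proof (intro prod_mono conjI)
    fix j assume "j \<in> {0..<k}"
    then show "norm (z + of_nat j) \<le> norm z + real k"
      using norm_triangle_ineq[of z "of_nat j"] by auto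
  qed auto
  finally show ?thesis by simp
qed

lemma Ints_complex_ReIm: "(z::complex) \<in> \<int> \<Longrightarrow> Im z = 0 \<and> Re z \<in> \<int>"
  by (auto elim!: Ints_cases)

lemma half_not_Int: "(x::real) \<in> \<int> \<Longrightarrow> x + 1/2 \<in> \<int> \<Longrightarrow> False"
proof -
  assume a: "x \<in> \<int>" "x + 1/2 \<in> \<int>"
  then have "(x + 1/2) - x \<in> \<int>" by (intro Ints_diff)
  then obtain k where k: "(1/2::real) = of_int k" by (auto elim!: Ints_cases)
  then have "real_of_int (2 * k) = 1" by simp
  then have "2 * k = 1" by linarith
  then show False by presburger
qed

context meij begin

definition K :: "complex set" where
  "K = {s. Re s = -Re b - 1/2 \<and> \<bar>Im s\<bar> \<le> H} \<union>
       {s. -Re b - 3/2 \<le> Re s \<and> Re s \<le> -Re b - 1/2 \<and> \<bar>Im s\<bar> = H}"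

lemma K_compact: "compact K"
proof -
  have "closed K" unfolding K_def
    by (intro closed_Un closed_Collect_conj closed_Collect_eq closed_Collect_le continuous_intros)
  moreover have "K \<subseteq> cball 0 (\<bar>Re b\<bar> + 2 + H)"
  proof
    fix s assume "s \<in> K"
    then have "\<bar>Re s\<bar> \<le> \<bar>Re b\<bar> + 2" "\<bar>Im s\<bar> \<le> H" unfolding K_def by auto
    then show "s \<in> cball 0 (\<bar>Re b\<bar> + 2 + H)" using cmod_le[of s] by auto
  qed
  then have "bounded K" using bounded_cball bounded_subset by blast
  ultimately show ?thesis by (simp add: compact_eq_bounded_closed)
qed

lemma K_good:
  assumes "s0 \<in> K"
  shows "Re (b + s0) \<le> 0" "b + s0 \<notin> \<int>"
proof -
  show "Re (b + s0) \<le> 0" using assms unfolding K_def by auto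
  show "b + s0 \<notin> \<int>"
  proof
    assume "b + s0 \<in> \<int>"
    then have I: "Im (b + s0) = 0" "Re (b + s0) \<in> \<int>" using Ints_complex_ReIm by blast+
    from assms show False unfolding K_def
    proof
      assume "s0 \<in> {s. Re s = -Re b - 1/2 \<and> \<bar>Im s\<bar> \<le> H}"
      then have "Re (b + s0) = -1/2" by auto
      then show False using I half_not_Int[of "-1/2"] by simp
    next
      assume "s0 \<in> {s. -Re b - 3/2 \<le> Re s \<and> Re s \<le> -Re b - 1/2 \<and> \<bar>Im s\<bar> = H}"
      then show False using I H_Imb by auto
    qed
  qed
qed

definition Lr :: nat where "Lr = nat \<lceil>norm (c - b)\<rceil>"
definition G0 :: "complex \<Rightarrow> complex" where
  "G0 s = Gamma (b + s) * rGamma (c + s) * exp (- s * of_real (ln t))"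

lemma h_shift:
  "h (s0 - of_nat N) = G0 s0 * (pochhammer (c + s0 - of_nat N) N / pochhammer (b + s0 - of_nat N) N)
      * P (s0 - of_nat N) * of_real (t ^ N)"
proof -
  have e: "exp (- (s0 - of_nat N) * of_real (ln t)) = exp (- s0 * of_real (ln t)) * of_real (t ^ N)"
  proof -
    have "exp (- (s0 - of_nat N) * of_real (ln t)) = exp (- s0 * of_real (ln t)) * exp (of_nat N * of_real (ln t))"
      by (simp add: algebra_simps flip: exp_add)
    also have "exp (of_nat N * of_real (ln t) :: complex) = exp (of_real (ln t)) ^ N" by (rule exp_of_nat_mult)
    also have "exp (of_real (ln t) :: complex) = of_real t" using t0 by (simp add: exp_of_real)
    finally show ?thesis by simp
  qed
  have g: "Gamma (b + (s0 - of_nat N)) = Gamma (b + s0) / pochhammer (b + s0 - of_nat N) N"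
    using Gamma_shift[of "b + s0" N] by (simp add: algebra_simps)
  have rg: "rGamma (c + (s0 - of_nat N)) = pochhammer (c + s0 - of_nat N) N * rGamma (c + s0)"
    using rGamma_shift[of "c + s0" N] by (simp add: algebra_simps)
  show ?thesis unfolding h_def G0_def e g rg by (simp add: field_simps)
qed

lemma h_est:
  obtains \<beta> where "\<beta> \<longlonglongrightarrow> 0" "\<And>N s0. s0 \<in> K \<Longrightarrow> norm (h (s0 - of_nat N)) \<le> \<beta> N"
proof -
  have "G0 holomorphic_on K" unfolding G0_def
    by (intro holomorphic_intros) (use K_good in \<open>auto dest: subsetD[OF nonpos_Ints_subset_Ints]\<close>)
  then have "continuous_on K G0" by (rule holomorphic_on_imp_continuous_on)
  then have "compact (G0 ` K)" using K_compact by (rule compact_continuous_image)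
  then obtain C0 where C0: "C0 > 0" "\<And>s. s \<in> K \<Longrightarrow> norm (G0 s) \<le> C0"
    using compact_imp_bounded[of "G0 ` K"] unfolding bounded_pos by auto
  obtain B0 where B0: "B0 > 0" "\<And>s. s \<in> K \<Longrightarrow> norm s \<le> B0"
    using compact_imp_bounded[OF K_compact] unfolding bounded_pos by auto
  define M where "M = (\<Sum>i<r. m i)"
  define A where "A = (\<Sum>i<r. norm (f i)) + B0 + real M"
  have A0: "A \<ge> 0" unfolding A_def using B0 by (simp add: sum_nonneg)
  define \<beta> where "\<beta> N = C0 * ((real N + 1) ^ Lr * ((A + real N) ^ M * t ^ N))" for N
  show ?thesis
  proof
    have lim1: "(\<lambda>N. (A + 1 + real N) ^ (Lr + M) * t ^ N) \<longlonglongrightarrow> 0"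
      using t0 t1 A0 by (intro poly_geom_lim) auto
    have "(\<lambda>N. (real N + 1) ^ Lr * ((A + real N) ^ M * t ^ N)) \<longlonglongrightarrow> 0"
    proof (rule Lim_null_comparison[OF _ lim1], intro always_eventually allI)
      fix N
      have "(real N + 1) ^ Lr \<le> (A + 1 + real N) ^ Lr" using A0 by (intro power_mono) auto
      moreover have "(A + real N) ^ M \<le> (A + 1 + real N) ^ M" using A0 by (intro power_mono) auto
      ultimately have "(real N + 1) ^ Lr * (A + real N) ^ M \<le> (A + 1 + real N) ^ (Lr + M)"
        unfolding power_add using A0 by (intro mult_mono) auto
      then have "(real N + 1) ^ Lr * (A + real N) ^ M * t ^ N \<le> (A + 1 + real N) ^ (Lr + M) * t ^ N"
        using t0 by (intro mult_right_mono) auto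
      then show "norm ((real N + 1) ^ Lr * ((A + real N) ^ M * t ^ N)) \<le> (A + 1 + real N) ^ (Lr + M) * t ^ N"
        using A0 t0 by (simp add: abs_mult mult.assoc)
    qed
    then show "\<beta> \<longlonglongrightarrow> 0" unfolding \<beta>_def by (rule tendsto_mult_right_zero)
  next
    fix N s0 assume s0: "s0 \<in> K"
    have r1: "norm (pochhammer (c + s0 - of_nat N) N / pochhammer (b + s0 - of_nat N) N) \<le> (real N + 1) ^ Lr"
    proof -
      have "norm (c - b) \<le> real Lr" unfolding Lr_def by (rule real_nat_ceiling_ge)
      from poch_ratio_bound'[OF K_good(1)[OF s0] this, of N] show ?thesis by (simp add: algebra_simps)
    qed
    have p1: "norm (P (s0 - of_nat N)) \<le> (A + real N) ^ M"
    proof -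
      have "norm (P (s0 - of_nat N)) \<le> (\<Prod>i<r. norm (pochhammer (f i + (s0 - of_nat N)) (m i)))"
        unfolding P_def by (rule norm_prod_le)
      also have "\<dots> \<le> (\<Prod>i<r. (A + real N) ^ m i)"
      proof (intro prod_mono conjI)
        fix i assume i: "i \<in> {..<r}"
        have "norm (f i + (s0 - of_nat N)) \<le> norm (f i) + norm s0 + real N"
          using norm_triangle_ineq[of "f i" "s0 - of_nat N"] norm_triangle_ineq4[of s0 "of_nat N"] by simp
        moreover have "norm (f i) \<le> (\<Sum>i<r. norm (f i))" using i by (intro member_le_sum) auto
        moreover have "m i \<le> M" unfolding M_def using i by (intro member_le_sum) auto
        ultimately have "norm (f i + (s0 - of_nat N)) + real (m i) \<le> A + real N"
          using B0(2)[OF s0] unfolding A_def by linarith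
        then show "norm (pochhammer (f i + (s0 - of_nat N)) (m i)) \<le> (A + real N) ^ m i"
          using norm_pochhammer_le[of "f i + (s0 - of_nat N)" "m i"]
          by (meson order.trans power_mono norm_ge_zero add_nonneg_nonneg of_nat_0_le_iff)
      qed auto
      also have "\<dots> = (A + real N) ^ M" unfolding M_def by (simp add: power_sum)
      finally show ?thesis .
    qed
    have "norm (h (s0 - of_nat N)) = norm (G0 s0) * norm (pochhammer (c + s0 - of_nat N) N / pochhammer (b + s0 - of_nat N) N)
        * norm (P (s0 - of_nat N)) * t ^ N"
      unfolding h_shift norm_mult using t0 by (simp add: abs_of_pos norm_power)
    also have "\<dots> \<le> C0 * (real N + 1) ^ Lr * (A + real N) ^ M * t ^ N"
      using C0 r1 p1 t0 A0 s0 by (intro mult_mono mult_nonneg_nonneg) auto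
    also have "\<dots> = \<beta> N" by (simp add: \<beta>_def algebra_simps)
    finally show "norm (h (s0 - of_nat N)) \<le> \<beta> N" .
  qed
qed

lemma K_shift_good:
  assumes "x + of_nat N \<in> K"
  shows "b + x \<notin> \<int>\<^sub>\<le>\<^sub>0"
proof
  assume "b + x \<in> \<int>\<^sub>\<le>\<^sub>0"
  then have "b + x \<in> \<int>" using nonpos_Ints_subset_Ints by blast
  then have "b + x + of_nat N \<in> \<int>" by (rule Ints_add[OF _ Ints_of_nat])
  then show False using K_good(2)[OF assms] by (simp add: add_ac)
qed

end


lemma binom_series:
  fixes z a :: complex
  assumes "norm z < 1"
  shows "(\<lambda>i. pochhammer a i / fact i * z ^ i) sums (1 - z) powr (- a)"
proof -
  have "(\<lambda>i. ((- a) gchoose i) * (- z) ^ i) sums (1 + (- z)) powr (- a)"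
    using assms by (intro gen_binomial_complex) simp
  moreover have "((- a) gchoose i) * (- z) ^ i = pochhammer a i / fact i * z ^ i" for i
  proof -
    have m: "(-1::complex)^i * (-1)^i = 1" by (simp flip: power_mult_distrib)
    have "((- a) gchoose i) * (- z) ^ i = ((-1)^i * (-1)^i) * (pochhammer a i / fact i * z ^ i)"
      by (simp add: gbinomial_pochhammer power_minus[of z] algebra_simps)
    then show ?thesis using m by simp
  qed
  ultimately show ?thesis by simp
qed

lemma ff_series:
  fixes z a :: complex
  assumes "norm z < 1"
  shows "(\<lambda>n. pochhammer a n / fact n * ff k (of_nat n) * z ^ n)
           sums (pochhammer a k * z ^ k * (1 - z) powr (- (a + of_nat k)))"
proof -
  define u where "u n = pochhammer a n / fact n * ff k (of_nat n) * z ^ n" for n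
  have u0: "u n = 0" if "n < k" for n
    using that by (simp add: u_def ff_of_nat binomial_eq_0)
  have "(\<lambda>i. pochhammer a k * z ^ k * (pochhammer (a + of_nat k) i / fact i * z ^ i))
          sums (pochhammer a k * z ^ k * (1 - z) powr (- (a + of_nat k)))"
    by (intro sums_mult binom_series assms)
  moreover have "u (i + k) = pochhammer a k * z ^ k * (pochhammer (a + of_nat k) i / fact i * z ^ i)" for i
  proof -
    have fl: "fact k * fact i * of_nat ((i + k) choose k) = (fact (i + k) :: complex)"
    proof -
      have "fact k * fact (i + k - k) * ((i + k) choose k) = fact (i + k)"
        by (intro binomial_fact_lemma) simp
      then have "of_nat (fact k * fact i * ((i + k) choose k)) = (of_nat (fact (i + k)) :: complex)"
        by simp
      then show ?thesis by (simp only: of_nat_mult of_nat_fact)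
    qed
    have nz: "(fact i :: complex) \<noteq> 0" "(fact (i + k) :: complex) \<noteq> 0" by simp_all
    have ffe: "ff k (of_nat (i + k) :: complex) = fact k * of_nat ((i + k) choose k)" by (rule ff_of_nat)
    have pe: "pochhammer a (i + k) = pochhammer a k * pochhammer (a + of_nat k) i"
      by (metis add.commute pochhammer_product')
    have "u (i + k) = pochhammer a k * pochhammer (a + of_nat k) i * (fact k * fact i * of_nat ((i + k) choose k)) / (fact i * fact (i + k)) * z ^ (i + k)"
      unfolding u_def ffe pe using nz by (simp add: field_simps)
    also have "\<dots> = pochhammer a k * pochhammer (a + of_nat k) i / fact i * z ^ (i + k)"
      unfolding fl using nz by (simp add: field_simps)
    also have "\<dots> = pochhammer a k * z ^ k * (pochhammer (a + of_nat k) i / fact i * z ^ i)"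
      by (simp add: power_add algebra_simps)
    finally show ?thesis .
  qed
  ultimately have "(\<lambda>i. u (i + k)) sums (pochhammer a k * z ^ k * (1 - z) powr (- (a + of_nat k)))"
    by simp
  then have "u sums (pochhammer a k * z ^ k * (1 - z) powr (- (a + of_nat k)))"
    using sums_zero_iff_shift[of k u, OF u0] by simp
  then show ?thesis by (simp add: u_def[abs_def])
qed

lemma Q_poly_sum:
  fixes f :: "nat \<Rightarrow> complex"
  shows "poly (\<Prod>i<r. pochhammer [:f i - b, -1:] (m i)) x
       = (\<Sum>j\<le>(\<Sum>i<r. m i). meijer_alpha r f m b j * x ^ j)"
proof -
  define Q where "Q = (\<Prod>i<r. pochhammer [:f i - b, -1:] (m i))"
  have degQ: "degree Q \<le> (\<Sum>i<r. m i)"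
  proof -
    have "degree Q \<le> (\<Sum>i<r. degree (pochhammer [:f i - b, -1:] (m i)))"
      unfolding Q_def using degree_prod_sum_le[of "{..<r}" "\<lambda>i. pochhammer [:f i - b, -1:] (m i)"]
      by (simp add: o_def)
    also have "\<dots> \<le> (\<Sum>i<r. m i)" by (intro sum_mono degree_pochhammer_lin)
    finally show ?thesis .
  qed
  have "poly Q x = (\<Sum>j\<le>degree Q. coeff Q j * x ^ j)" by (simp add: poly_altdef)
  also have "\<dots> = (\<Sum>j\<le>(\<Sum>i<r. m i). coeff Q j * x ^ j)"
    using degQ by (intro sum.mono_neutral_left) (auto simp: coeff_eq_0)
  finally show ?thesis unfolding Q_def meijer_alpha_def .
qed

context meij begin

definition MM :: nat where "MM = (\<Sum>i<r. m i)"
definition Dk :: "nat \<Rightarrow> complex" where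
  "Dk k = (\<Sum>j=k..MM. meijer_alpha r f m b j * of_nat (Stirling j k))"

lemma P_ff: "P (-b - of_nat n) = (\<Sum>k\<le>MM. Dk k * ff k (of_nat n))"
proof -
  have "P (-b - of_nat n) = poly (\<Prod>i<r. pochhammer [:f i - b, -1:] (m i)) (of_nat n)"
    unfolding P_def poly_prod poly_pochhammer by (simp add: algebra_simps)
  also have "\<dots> = (\<Sum>j\<le>MM. meijer_alpha r f m b j * of_nat n ^ j)"
    unfolding Q_poly_sum MM_def ..
  also have "\<dots> = (\<Sum>j\<le>MM. \<Sum>k\<le>MM. meijer_alpha r f m b j * (of_nat (Stirling j k) * ff k (of_nat n)))"
  proof (intro sum.cong refl)
    fix j assume j: "j \<in> {..MM}"
    have "(of_nat n :: complex) ^ j = (\<Sum>k\<le>j. of_nat (Stirling j k) * ff k (of_nat n))"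
      by (rule stirling_power)
    also have "\<dots> = (\<Sum>k\<le>MM. of_nat (Stirling j k) * ff k (of_nat n))"
      using j by (intro sum.mono_neutral_left) auto
    finally show "meijer_alpha r f m b j * of_nat n ^ j = (\<Sum>k\<le>MM. meijer_alpha r f m b j * (of_nat (Stirling j k) * ff k (of_nat n)))"
      by (simp add: sum_distrib_left)
  qed
  also have "\<dots> = (\<Sum>k\<le>MM. (\<Sum>j\<le>MM. meijer_alpha r f m b j * of_nat (Stirling j k)) * ff k (of_nat n))"
    by (subst sum.swap) (simp add: sum_distrib_right mult.assoc)
  also have "\<dots> = (\<Sum>k\<le>MM. Dk k * ff k (of_nat n))"
  proof (intro sum.cong refl arg_cong[where f="\<lambda>z. z * _"])
    fix k assume "k \<in> {..MM}"
    show "(\<Sum>j\<le>MM. meijer_alpha r f m b j * of_nat (Stirling j k)) = Dk k"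
      unfolding Dk_def by (intro sum.mono_neutral_right) auto
  qed
  finally show ?thesis .
qed

definition T0 :: complex where
  "T0 = (complex_of_real t) powr b * rGamma (c - b) *
        (\<Sum>k\<le>MM. Dk k * (pochhammer (1 + b - c) k * of_real t ^ k
             * (1 - of_real t) powr (- ((1 + b - c) + of_nat k))))"

lemma res_sums: "res sums T0"
proof -
  define a where "a = 1 + b - c"
  define u where "u k n = pochhammer a n / fact n * ff k (of_nat n) * (of_real t :: complex) ^ n" for k n
  have us: "u k sums (pochhammer a k * of_real t ^ k * (1 - of_real t) powr (- (a + of_nat k)))" for k
    unfolding u_def using t0 t1 by (intro ff_series) simp
  have "(\<lambda>n. (complex_of_real t) powr b * rGamma (c - b) * (\<Sum>k\<le>MM. Dk k * u k n)) sums T0"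
    unfolding T0_def a_def[symmetric]
    by (intro sums_mult sums_sum) (use us in auto)
  moreover have "res n = (complex_of_real t) powr b * rGamma (c - b) * (\<Sum>k\<le>MM. Dk k * u k n)" for n
  proof -
    have pa: "(-1)^n * pochhammer (c - b - of_nat n) n = pochhammer a n"
    proof -
      have "pochhammer (c - b - 1 - of_nat n + 1) n = (-1)^n * pochhammer (- (c - b - 1)) n"
        by (rule pochhammer_minus')
      then have "pochhammer (c - b - of_nat n) n = (-1)^n * pochhammer a n"
        by (simp add: a_def algebra_simps)
      moreover have "(-1::complex)^n * (-1)^n = 1" by (simp flip: power_mult_distrib)
      ultimately show ?thesis by (metis mult.assoc mult_1)
    qed
    have rg: "rGamma (c - b - of_nat n) = pochhammer (c - b - of_nat n) n * rGamma (c - b)"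
      using pochhammer_rGamma[of "c - b - of_nat n" n] by simp
    have ex: "exp ((b + of_nat n) * of_real (ln t)) = (complex_of_real t) powr b * of_real t ^ n"
    proof -
      have "exp ((b + of_nat n) * of_real (ln t)) = exp (b * of_real (ln t)) * exp (of_nat n * of_real (ln t))"
        by (simp add: distrib_right exp_add)
      also have "exp (of_nat n * of_real (ln t) :: complex) = exp (of_real (ln t)) ^ n" by (rule exp_of_nat_mult)
      also have "exp (of_real (ln t) :: complex) = of_real t" using t0 by (simp add: exp_of_real)
      also have "exp (b * of_real (ln t)) = (complex_of_real t) powr b"
        using t0 by (simp add: powr_def Ln_of_real)
      finally show ?thesis .
    qed
    have "res n = ((-1)^n * pochhammer (c - b - of_nat n) n) / fact n * rGamma (c - b) * P (-b - of_nat n)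
                  * ((complex_of_real t) powr b * of_real t ^ n)"
      unfolding res_def rg ex by (simp add: algebra_simps)
    also have "\<dots> = (complex_of_real t) powr b * rGamma (c - b) * (pochhammer a n / fact n * of_real t ^ n * P (-b - of_nat n))"
      unfolding pa by (simp add: algebra_simps)
    also have "\<dots> = (complex_of_real t) powr b * rGamma (c - b) * (\<Sum>k\<le>MM. Dk k * u k n)"
      unfolding P_ff u_def by (simp add: sum_distrib_left algebra_simps)
    finally show ?thesis .
  qed
  ultimately show ?thesis by (metis (no_types, lifting) ext)
qed

lemma res_lim: "(\<lambda>N. \<Sum>n\<le>N. res n) \<longlonglongrightarrow> T0"
proof -
  have "(\<lambda>N. \<Sum>n<N. res n) \<longlonglongrightarrow> T0" using res_sums by (simp add: sums_def)
  then have "(\<lambda>N. \<Sum>n<Suc N. res n) \<longlonglongrightarrow> T0" by (rule LIMSEQ_Suc)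
  then show ?thesis by (simp add: lessThan_Suc_atMost)
qed

lemma T0_eq:
  "T0 = (complex_of_real t) powr b * (complex_of_real (1 - t)) powr (c - b - 1) * rGamma (c - b)
           * (\<Sum>k\<le>MM. Dk k * pochhammer (c - b - of_nat k) k
                 * (complex_of_real t) ^ k / (complex_of_real (t - 1)) ^ k)"
proof -
  have "pochhammer (1 + b - c) k * of_real t ^ k * (1 - of_real t) powr (- ((1 + b - c) + of_nat k))
      = (complex_of_real (1 - t)) powr (c - b - 1) * (pochhammer (c - b - of_nat k) k
                 * (complex_of_real t) ^ k / (complex_of_real (t - 1)) ^ k)" for k
  proof -
    have nz: "complex_of_real (1 - t) \<noteq> 0" using t1 by simp
    have pw: "(complex_of_real (1 - t)) powr (- ((1 + b - c) + of_nat k))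
        = (complex_of_real (1 - t)) powr (c - b - 1) / (complex_of_real (1 - t)) ^ k"
    proof -
      have e: "- ((1 + b - c) + of_nat k) = (c - b - 1) - of_nat k" by (simp add: algebra_simps)
      have "(complex_of_real (1 - t)) powr (- ((1 + b - c) + of_nat k))
          = (complex_of_real (1 - t)) powr ((c - b - 1) - of_nat k)" by (simp only: e)
      also have "\<dots> = (complex_of_real (1 - t)) powr (c - b - 1) / (complex_of_real (1 - t)) powr (of_nat k)"
        by (rule powr_diff)
      also have "(complex_of_real (1 - t)) powr (of_nat k) = (complex_of_real (1 - t)) ^ k"
        using nz by (intro powr_nat') auto
      finally show ?thesis .
    qed
    have pa: "pochhammer (c - b - of_nat k) k = (-1)^k * pochhammer (1 + b - c) k"
      using pochhammer_minus'[of "c - b - 1" k] by (simp add: algebra_simps)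
    have tm: "complex_of_real (t - 1) ^ k = (-1)^k * complex_of_real (1 - t) ^ k"
    proof -
      have "complex_of_real (t - 1) = - complex_of_real (1 - t)" by simp
      then show ?thesis by (simp only: power_minus[of "complex_of_real (1 - t)" k])
    qed
    have m: "(-1::complex)^k * (-1)^k = 1" by (simp flip: power_mult_distrib)
    have nz2: "complex_of_real (1 - t) ^ k \<noteq> 0" using nz by simp
    have cancel: "(-1)^k * pochhammer (1 + b - c) k * complex_of_real t ^ k / ((-1)^k * complex_of_real (1 - t) ^ k)
          = pochhammer (1 + b - c) k * complex_of_real t ^ k / complex_of_real (1 - t) ^ k"
      by (simp add: mult.assoc)
    have ot: "(1 - complex_of_real t) = complex_of_real (1 - t)" by simp
    show ?thesis unfolding ot pw pa tm cancel by (simp add: mult_ac)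
  qed
  then have "(\<Sum>k\<le>MM. Dk k * (pochhammer (1 + b - c) k * of_real t ^ k
             * (1 - of_real t) powr (- ((1 + b - c) + of_nat k))))
     = (complex_of_real (1 - t)) powr (c - b - 1) * (\<Sum>k\<le>MM. Dk k * pochhammer (c - b - of_nat k) k
                 * (complex_of_real t) ^ k / (complex_of_real (t - 1)) ^ k)"
    by (simp add: sum_distrib_left mult_ac)
  then show ?thesis unfolding T0_def by (simp add: mult_ac)
qed

end


context meij begin

lemma good_Im: "\<bar>Im x\<bar> = H \<Longrightarrow> b + x \<notin> \<int>\<^sub>\<le>\<^sub>0"
  using nonpos_Ints_ReIm(1)[of "b + x"] H_Imb by auto
lemma good_Re: "Re x = X \<Longrightarrow> b + x \<notin> \<int>\<^sub>\<le>\<^sub>0"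
  using nonpos_Ints_ReIm(2)[of "b + x"] X_Reb by auto

lemma seg_cont: "(\<And>x. x \<in> closed_segment a1 a2 \<Longrightarrow> b + x \<notin> \<int>\<^sub>\<le>\<^sub>0) \<Longrightarrow> continuous_on (closed_segment a1 a2) h"
  by (intro h_cont) auto
lemma seg_int: "(\<And>x. x \<in> closed_segment a1 a2 \<Longrightarrow> b + x \<notin> \<int>\<^sub>\<le>\<^sub>0) \<Longrightarrow> h contour_integrable_on linepath a1 a2"
  by (intro contour_integrable_continuous_linepath seg_cont) auto

lemma segIm: "x \<in> closed_segment (Complex p y) (Complex q y) \<Longrightarrow> Im x = y \<and> Re x \<in> closed_segment p q"
  by (simp add: closed_segment_same_Im)
lemma segRe: "x \<in> closed_segment (Complex y p) (Complex y q) \<Longrightarrow> Re x = y \<and> Im x \<in> closed_segment p q"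
  by (simp add: closed_segment_same_Re)

lemma cont_l1: "continuous_on (closed_segment (Complex p (-H)) (Complex q (-H))) h"
  by (intro seg_cont good_Im) (use H_pos in \<open>auto dest!: segIm\<close>)
lemma cont_l3: "continuous_on (closed_segment (Complex p H) (Complex q H)) h"
  by (intro seg_cont good_Im) (use H_pos in \<open>auto dest!: segIm\<close>)
lemma int_l1: "h contour_integrable_on linepath (Complex p (-H)) (Complex q (-H))"
  by (intro contour_integrable_continuous_linepath cont_l1)
lemma int_l3: "h contour_integrable_on linepath (Complex p H) (Complex q H)"
  by (intro contour_integrable_continuous_linepath cont_l3)
lemma int_l2: "h contour_integrable_on linepath (Complex X p) (Complex X q)"
  by (intro seg_int good_Re) (auto dest!: segRe)

lemma loop_join:
  "contour_integral (meijer_loop X H R) h =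
     contour_integral (linepath (Complex (-R) (-H)) (Complex X (-H))) h
   + contour_integral (linepath (Complex X (-H)) (Complex X H)) h
   + contour_integral (linepath (Complex X H) (Complex (-R) H)) h"
  unfolding meijer_loop_def
  by (simp add: int_l1 int_l2 int_l3 valid_path_join contour_integrable_joinI)

lemma loop_split:
  assumes "R' \<le> R" "-R' \<le> X"
  shows "contour_integral (meijer_loop X H R) h = contour_integral (meijer_loop X H R') h
      + (contour_integral (linepath (Complex (-R) (-H)) (Complex (-R') (-H))) h
      + contour_integral (linepath (Complex (-R') H) (Complex (-R) H)) h)"
proof -
  have c1: "Complex (-R') (-H) \<in> closed_segment (Complex (-R) (-H)) (Complex X (-H))"
    using assms by (simp add: closed_segment_same_Im closed_segment_eq_real_ivl)
  have c3: "Complex (-R') H \<in> closed_segment (Complex X H) (Complex (-R) H)"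
    using assms by (simp add: closed_segment_same_Im closed_segment_eq_real_ivl)
  have s1: "contour_integral (linepath (Complex (-R) (-H)) (Complex X (-H))) h
      = contour_integral (linepath (Complex (-R) (-H)) (Complex (-R') (-H))) h
      + contour_integral (linepath (Complex (-R') (-H)) (Complex X (-H))) h"
    by (rule contour_integral_split_linepath[OF cont_l1 c1])
  have s3: "contour_integral (linepath (Complex X H) (Complex (-R) H)) h
      = contour_integral (linepath (Complex X H) (Complex (-R') H)) h
      + contour_integral (linepath (Complex (-R') H) (Complex (-R) H)) h"
    by (rule contour_integral_split_linepath[OF cont_l3 c3])
  show ?thesis unfolding loop_join[of R] loop_join[of R'] s1 s3 by (simp add: algebra_simps)
qed

lemma rect_join:
  assumes "h contour_integrable_on linepath (Complex (-R') H) (Complex (-R') (-H))"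
  shows "contour_integral (rectpath (Complex (-R') (-H)) (Complex X H)) h
       = contour_integral (meijer_loop X H R') h + contour_integral (linepath (Complex (-R') H) (Complex (-R') (-H))) h"
  unfolding rectpath_def Let_def loop_join
  by (simp add: int_l1 int_l2 int_l3 assms valid_path_join contour_integrable_joinI)

lemma inK1: "Re s = -Re b - 1/2 \<Longrightarrow> \<bar>Im s\<bar> \<le> H \<Longrightarrow> s \<in> K"
  by (simp add: K_def)
lemma inK2: "-Re b - 3/2 \<le> Re s \<Longrightarrow> Re s \<le> -Re b - 1/2 \<Longrightarrow> \<bar>Im s\<bar> = H \<Longrightarrow> s \<in> K"
  by (simp add: K_def)

lemma beta_nonneg:
  assumes "\<And>N s0. s0 \<in> K \<Longrightarrow> norm (h (s0 - of_nat N)) \<le> \<beta> N"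
  shows "\<beta> N \<ge> 0"
proof -
  have "Complex (-Re b - 1/2) 0 \<in> K" by (rule inK1) (use H_pos in auto)
  from assms[OF this, of N] show ?thesis by (meson norm_ge_zero order.trans)
qed

lemma V_bound:
  assumes \<beta>: "\<And>N s0. s0 \<in> K \<Longrightarrow> norm (h (s0 - of_nat N)) \<le> \<beta> N"
  shows "norm (contour_integral (linepath (Complex (-RN N) H) (Complex (-RN N) (-H))) h) \<le> \<beta> N * (2 * H)
       \<and> h contour_integrable_on linepath (Complex (-RN N) H) (Complex (-RN N) (-H))"
proof -
  have inK: "x + of_nat N \<in> K" if "x \<in> closed_segment (Complex (-RN N) H) (Complex (-RN N) (-H))" for x
  proof (rule inK1)
    from segRe[OF that] have "Re x = - RN N" "Im x \<in> closed_segment H (-H)" by auto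
    then show "Re (x + of_nat N) = -Re b - 1/2" "\<bar>Im (x + of_nat N)\<bar> \<le> H"
      using H_pos by (auto simp: RN_def closed_segment_eq_real_ivl)
  qed
  have int: "h contour_integrable_on linepath (Complex (-RN N) H) (Complex (-RN N) (-H))"
    by (intro seg_int) (rule K_shift_good[OF inK])
  have "norm (contour_integral (linepath (Complex (-RN N) H) (Complex (-RN N) (-H))) h)
        \<le> \<beta> N * norm (Complex (-RN N) (-H) - Complex (-RN N) H)"
  proof (rule contour_integral_bound_linepath[OF int])
    show "0 \<le> \<beta> N" by (rule beta_nonneg[OF \<beta>])
    fix x assume x: "x \<in> closed_segment (Complex (-RN N) H) (Complex (-RN N) (-H))"
    have "norm (h ((x + of_nat N) - of_nat N)) \<le> \<beta> N" by (rule \<beta>[OF inK[OF x]])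
    then show "norm (h x) \<le> \<beta> N" by simp
  qed
  also have "\<dots> \<le> \<beta> N * (2 * H)"
  proof (rule mult_left_mono)
    show "norm (Complex (-RN N) (-H) - Complex (-RN N) H) \<le> 2 * H"
      using cmod_le[of "Complex (-RN N) (-H) - Complex (-RN N) H"] H_pos by simp
    show "0 \<le> \<beta> N" by (rule beta_nonneg[OF \<beta>])
  qed
  finally show ?thesis using int by blast
qed

lemma E_bound:
  assumes \<beta>: "\<And>N s0. s0 \<in> K \<Longrightarrow> norm (h (s0 - of_nat N)) \<le> \<beta> N"
    and R: "RN N \<le> R" "R < RN N + 1" and y: "\<bar>y\<bar> = H"
  shows "norm (contour_integral (linepath (Complex (-R) y) (Complex (-RN N) y)) h) \<le> \<beta> N"
    and "norm (contour_integral (linepath (Complex (-RN N) y) (Complex (-R) y)) h) \<le> \<beta> N"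
proof -
  have inK: "x + of_nat N \<in> K" if "x \<in> closed_segment (Complex (-R) y) (Complex (-RN N) y)" for x
  proof (rule inK2)
    from segIm[OF that] have "Im x = y" "Re x \<in> closed_segment (-R) (-RN N)" by auto
    then show "-Re b - 3/2 \<le> Re (x + of_nat N)" "Re (x + of_nat N) \<le> -Re b - 1/2" "\<bar>Im (x + of_nat N)\<bar> = H"
      using R y by (auto simp: RN_def closed_segment_eq_real_ivl)
  qed
  have len: "norm (Complex (-RN N) y - Complex (-R) y) \<le> 1"
    using cmod_le[of "Complex (-RN N) y - Complex (-R) y"] R by simp
  have b0: "0 \<le> \<beta> N" by (rule beta_nonneg[OF \<beta>])
  have hb: "norm (h x) \<le> \<beta> N" if "x \<in> closed_segment (Complex (-R) y) (Complex (-RN N) y)" for x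
  proof -
    have "norm (h ((x + of_nat N) - of_nat N)) \<le> \<beta> N" by (rule \<beta>[OF inK[OF that]])
    then show ?thesis by simp
  qed
  have int: "h contour_integrable_on linepath (Complex (-R) y) (Complex (-RN N) y)"
    by (intro seg_int) (rule K_shift_good[OF inK])
  have "norm (contour_integral (linepath (Complex (-R) y) (Complex (-RN N) y)) h)
        \<le> \<beta> N * norm (Complex (-RN N) y - Complex (-R) y)"
    by (rule contour_integral_bound_linepath[OF int b0 hb])
  also have "\<dots> \<le> \<beta> N * 1" using len b0 by (intro mult_left_mono) auto
  finally show "norm (contour_integral (linepath (Complex (-R) y) (Complex (-RN N) y)) h) \<le> \<beta> N" by simp
  have int': "h contour_integrable_on linepath (Complex (-RN N) y) (Complex (-R) y)"
    by (intro seg_int) (rule K_shift_good[OF inK], simp add: closed_segment_commute)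
  have len': "norm (Complex (-R) y - Complex (-RN N) y) \<le> 1"
    using cmod_le[of "Complex (-R) y - Complex (-RN N) y"] R by simp
  have "norm (contour_integral (linepath (Complex (-RN N) y) (Complex (-R) y)) h)
        \<le> \<beta> N * norm (Complex (-R) y - Complex (-RN N) y)"
    by (rule contour_integral_bound_linepath[OF int' b0]) (intro hb, simp add: closed_segment_commute)
  also have "\<dots> \<le> \<beta> N * 1" using len' b0 by (intro mult_left_mono) auto
  finally show "norm (contour_integral (linepath (Complex (-RN N) y) (Complex (-R) y)) h) \<le> \<beta> N" by simp
qed

lemma loop_lim:
  "((\<lambda>R. contour_integral (meijer_loop X H R) h / (2 * of_real pi * \<i>)) \<longlongrightarrow> T0) at_top"
proof -
  obtain \<beta> where \<beta>: "\<beta> \<longlonglongrightarrow> 0" "\<And>N s0. s0 \<in> K \<Longrightarrow> norm (h (s0 - of_nat N)) \<le> \<beta> N"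
    using h_est by blast
  define Nf where "Nf R = nat \<lfloor>R - Re b - 1/2\<rfloor>" for R
  define V where "V N = contour_integral (linepath (Complex (-RN N) H) (Complex (-RN N) (-H))) h" for N
  define E where "E R = contour_integral (linepath (Complex (-R) (-H)) (Complex (-RN (Nf R)) (-H))) h
                      + contour_integral (linepath (Complex (-RN (Nf R)) H) (Complex (-R) H)) h" for R
  define c2 where "c2 = 2 * complex_of_real pi * \<i>"
  have c2nz: "c2 \<noteq> 0" by (simp add: c2_def)
  have Nlim: "filterlim Nf at_top at_top"
    unfolding filterlim_at_top eventually_at_top_linorder
  proof
    fix Z :: nat
    show "\<exists>N0. \<forall>R\<ge>N0. Z \<le> Nf R"
      by (rule exI[of _ "real Z + Re b + 1/2"]) (auto simp: Nf_def intro!: le_nat_floor)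
  qed
  have Nf_prop: "RN (Nf R) \<le> R \<and> R < RN (Nf R) + 1" if "R \<ge> Re b + 1/2" for R
  proof -
    define y where "y = R - Re b - 1/2"
    have y0: "y \<ge> 0" using that by (simp add: y_def)
    have nf: "real (Nf R) = of_int \<lfloor>y\<rfloor>" using y0 by (simp add: Nf_def y_def)
    have f1: "of_int \<lfloor>y\<rfloor> \<le> y" and f2: "y < of_int \<lfloor>y\<rfloor> + 1" by linarith+
    have "RN (Nf R) = Re b + of_int \<lfloor>y\<rfloor> + 1/2" unfolding RN_def nf ..
    then show ?thesis using f1 f2 unfolding y_def by linarith
  qed
  have Vlim: "V \<longlonglongrightarrow> 0"
  proof (rule Lim_null_comparison)
    show "\<forall>\<^sub>F N in sequentially. norm (V N) \<le> \<beta> N * (2 * H)"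
      using V_bound[OF \<beta>(2)] by (auto simp: V_def)
    show "(\<lambda>N. \<beta> N * (2 * H)) \<longlonglongrightarrow> 0"
      using tendsto_mult[OF \<beta>(1) tendsto_const[of "2 * H"]] by simp
  qed
  have G: "(\<lambda>N. (\<Sum>n\<le>N. res n) - V N / c2) \<longlonglongrightarrow> T0 - 0 / c2"
    by (intro tendsto_diff tendsto_divide res_lim Vlim tendsto_const c2nz)
  have GN: "((\<lambda>R. (\<Sum>n\<le>Nf R. res n) - V (Nf R) / c2) \<longlongrightarrow> T0) at_top"
    using filterlim_compose[OF G Nlim] by simp
  have Elim: "((\<lambda>R. E R / c2) \<longlongrightarrow> 0) at_top"
  proof -
    have "(E \<longlongrightarrow> 0) at_top"
    proof (rule Lim_null_comparison)
      show "eventually (\<lambda>R. norm (E R) \<le> 2 * \<beta> (Nf R)) at_top"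
        unfolding eventually_at_top_linorder
      proof (intro exI allI impI)
        fix R assume R: "R \<ge> Re b + 1/2"
        note NP = Nf_prop[OF R]
        have "norm (E R) \<le> norm (contour_integral (linepath (Complex (-R) (-H)) (Complex (-RN (Nf R)) (-H))) h)
                          + norm (contour_integral (linepath (Complex (-RN (Nf R)) H) (Complex (-R) H)) h)"
          unfolding E_def by (rule norm_triangle_ineq)
        also have "\<dots> \<le> \<beta> (Nf R) + \<beta> (Nf R)"
          using E_bound(1)[OF \<beta>(2) conjunct1[OF NP] conjunct2[OF NP], of "-H"]
                E_bound(2)[OF \<beta>(2) conjunct1[OF NP] conjunct2[OF NP], of H] H_pos
          by (intro add_mono) auto
        finally show "norm (E R) \<le> 2 * \<beta> (Nf R)" by simp
      qed
      show "((\<lambda>R. 2 * \<beta> (Nf R)) \<longlongrightarrow> 0) at_top"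
        using tendsto_mult[OF tendsto_const[of 2] filterlim_compose[OF \<beta>(1) Nlim]] by simp
    qed
    then show ?thesis using tendsto_divide[OF _ tendsto_const c2nz] by fastforce
  qed
  have eq: "eventually (\<lambda>R. contour_integral (meijer_loop X H R) h / c2
               = ((\<Sum>n\<le>Nf R. res n) - V (Nf R) / c2) + E R / c2) at_top"
    unfolding eventually_at_top_linorder
  proof (intro exI allI impI)
    fix R assume R: "R \<ge> Re b + 1/2"
    define N where "N = Nf R"
    have NP: "RN N \<le> R" using Nf_prop[OF R] by (simp add: N_def)
    have RX: "- RN N \<le> X" using X_Reb by (simp add: RN_def)
    have "contour_integral (meijer_loop X H R) h = contour_integral (meijer_loop X H (RN N)) h + E R"
      unfolding E_def N_def[symmetric] by (rule loop_split[OF NP RX])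
    moreover have "contour_integral (meijer_loop X H (RN N)) h = c2 * (\<Sum>n\<le>N. res n) - V N"
      using rect_join[OF conjunct2[OF V_bound[OF \<beta>(2)]], of N] rect_res[of N]
      by (simp add: c2_def V_def)
    ultimately show "contour_integral (meijer_loop X H R) h / c2
               = ((\<Sum>n\<le>Nf R. res n) - V (Nf R) / c2) + E R / c2"
      using c2nz by (simp add: N_def field_simps)
  qed
  have "((\<lambda>R. ((\<Sum>n\<le>Nf R. res n) - V (Nf R) / c2) + E R / c2) \<longlongrightarrow> T0 + 0) at_top"
    by (intro tendsto_add GN Elim)
  then have "((\<lambda>R. contour_integral (meijer_loop X H R) h / c2) \<longlongrightarrow> T0) at_top"
    using tendsto_cong[OF eq] by simp
  then show ?thesis by (simp add: c2_def)
qed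

end

theorem lemma1:
  fixes r :: nat and m :: "nat \<Rightarrow> nat" and f :: "nat \<Rightarrow> complex"
    and b c :: complex and t :: real
  assumes "r \<ge> 1" and "0 < t" and "t < 1"
  defines "M \<equiv> (\<Sum>i<r. m i)"
  defines "D \<equiv> (\<lambda>k. \<Sum>j=k..M. meijer_alpha r f m b j * of_nat (Stirling j k))"
  shows "meijerG r t c f b m =
           (complex_of_real t) powr b * (complex_of_real (1 - t)) powr (c - b - 1) * rGamma (c - b)
           * (\<Sum>k\<le>M. D k * pochhammer (c - b - of_nat k) k
                 * (complex_of_real t) ^ k / (complex_of_real (t - 1)) ^ k)
         \<and> (\<forall>k\<le>M. (\<forall>n\<le>k. \<forall>i<r. pochhammer (1 - f i + b - of_nat (m i)) n \<noteq> 0) \<longrightarrow>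
           D k = (-1) ^ k * (\<Prod>i<r. pochhammer (f i - b) (m i)) / fact k * hyp_F r f m b k)"
proof -
  interpret meij r m f b c t using assms(2,3) by unfold_locales
  have L: "meijerG r t c f b m = T0"
    unfolding meijerG_def I_eq
    by (rule tendsto_Lim) (simp_all add: loop_lim)
  have MM: "M = MM" by (simp add: M_def MM_def)
  have DD: "D k = Dk k" for k by (simp add: D_def Dk_def MM)
  show ?thesis
  proof
    show "meijerG r t c f b m =
           (complex_of_real t) powr b * (complex_of_real (1 - t)) powr (c - b - 1) * rGamma (c - b)
           * (\<Sum>k\<le>M. D k * pochhammer (c - b - of_nat k) k
                 * (complex_of_real t) ^ k / (complex_of_real (t - 1)) ^ k)"
      unfolding L T0_eq MM DD ..
    show "\<forall>k\<le>M. (\<forall>n\<le>k. \<forall>i<r. pochhammer (1 - f i + b - of_nat (m i)) n \<noteq> 0) \<longrightarrow>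
           D k = (-1) ^ k * (\<Prod>i<r. pochhammer (f i - b) (m i)) / fact k * hyp_F r f m b k"
      unfolding D_def using part2[OF M_def[THEN meta_eq_to_obj_eq]] by blast
  qed
qed

end
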